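(* Let $a>0$ and let $f:(0,\infty)\to(0,\infty)$ be twice continuously differentiable with $f'(x)>0$ and $f''(x)<0$ for all $x>0$, and $\lim_{x\to\infty}f(x)=\infty$. Suppose $x^*>0$ satisfies $f(x^*+1)\le a$. Then there exists a positive integer $n\ge x^*$ such that $0\le a-f(n)\le f'(x^* )$. *)

theory Defs
  imports Complex_Main
begin

end

theory Submission
  imports Defs
begin

theorem lemma6p1:
  fixes f f' f'' :: "real \<Rightarrow> real" and a xs :: real
  assumes a_pos: "a > 0"
    and f_pos: "\<And>x. x > 0 \<Longrightarrow> f x > 0"
    and f_deriv: "\<And>x. x > 0 \<Longrightarrow> (f has_real_derivative f' x) (at x)"
    and f'_deriv: "\<And>x. x > 0 \<Longrightarrow> (f' has_real_derivative f'' x) (at x)"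
    and f''_cont: "continuous_on {0<..} f''"
    and f'_pos: "\<And>x. x > 0 \<Longrightarrow> f' x > 0"
    and f''_neg: "\<And>x. x > 0 \<Longrightarrow> f'' x < 0"
    and f_lim: "filterlim f at_top at_top"
    and xs_pos: "xs > 0"
    and xs_bound: "f (xs + 1) \<le> a"
  shows "\<exists>n::nat. n > 0 \<and> real n \<ge> xs \<and> 0 \<le> a - f (real n) \<and> a - f (real n) \<le> f' xs"
proof -
  have inc: "f x < f y" if "0 < x" "x < y" for x y
    apply (rule DERIV_pos_imp_increasing[of x y f])
    proof -
      fix t assume "x \<le> t" "t \<le> y"
      hence "t > 0" using that by linarith
      thus "\<exists>d. (f has_real_derivative d) (at t) \<and> 0 < d" using f_deriv f'_pos by blast
    qed (use that in auto)
  have dec: "f' y < f' x" if "0 < x" "x < y" for x y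
    apply (rule DERIV_neg_imp_decreasing[of x y f'])
    proof -
      fix t assume "x \<le> t" "t \<le> y"
      hence "t > 0" using that by linarith
      thus "\<exists>d. (f' has_real_derivative d) (at t) \<and> d < 0" using f'_deriv f''_neg by blast
    qed (use that in auto)
  from f_lim have "eventually (\<lambda>x. f x > a) at_top"
    by (simp add: filterlim_at_top_dense)
  then obtain N where N: "\<And>x. x \<ge> N \<Longrightarrow> f x > a" by (auto simp: eventually_at_top_linorder)
  define S where "S = {n::nat. real n \<ge> xs \<and> f (real n) \<le> a}"
  have Sb: "S \<subseteq> {..nat (ceiling N)}"
  proof
    fix n assume "n \<in> S"
    hence "f (real n) \<le> a" by (simp add: S_def)
    hence "\<not> real n \<ge> N" using N by force
    thus "n \<in> {..nat (ceiling N)}" by auto linarith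
  qed
  hence fin: "finite S" by (rule finite_subset) simp
  define m where "m = nat (ceiling xs)"
  have m1: "real m \<ge> xs" "real m < xs + 1" using xs_pos by (auto simp: m_def) linarith+
  have "f (real m) \<le> a"
    using inc[of "real m" "xs+1"] m1 xs_pos xs_bound by linarith
  hence "m \<in> S" using m1 by (simp add: S_def)
  define n where "n = Max S"
  have nS: "n \<in> S" using fin \<open>m \<in> S\<close> n_def Max_in by blast
  have nmax: "\<And>k. k \<in> S \<Longrightarrow> k \<le> n" using fin n_def by simp
  have n1: "real n \<ge> xs" "f (real n) \<le> a" using nS by (auto simp: S_def)
  have "Suc n \<notin> S" using nmax by force
  hence fa: "f (real n + 1) > a" using n1 by (simp add: S_def add.commute)
  have npos: "real n > 0" using n1 xs_pos by linarith
  obtain z where z: "real n < z" "z < real n + 1" "f (real n + 1) - f (real n) = (real n + 1 - real n) * f' z"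
    using MVT2[of "real n" "real n + 1" f f'] f_deriv npos by force
  have "f' z \<le> f' xs"
    using dec[of xs z] z n1 xs_pos by (cases "xs = z") auto
  hence "a - f (real n) \<le> f' xs" using fa z by simp
  moreover have "n > 0" using npos by simp
  ultimately show ?thesis using n1 by auto
qed

end
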